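(* Let $\Sigma=[\sigma_{hk}]$ be a $p\times p$ Hermitian positive definite complex matrix and $\alpha=(n_1,m_1,\dots,n_p,m_p)\in\mathbb Z_{\ge0}^{2p}$ with supporting sets $N=\{h:n_h\neq0\}$, $M=\{k:m_k\neq0\}$. Then the moments of $\mathcal{CN}_p(\Sigma)$ satisfy the $\#N+\#M\le 2p$ relations $$\nu(\alpha)=\sum_{k\in M}m_k\,\sigma_{hk}\,\nu(\alpha^-_{hk})\quad\text{for each }h\in N,\qquad \nu(\alpha)=\sum_{h\in N}n_h\,\sigma_{hk}\,\nu(\alpha^-_{hk})\quad\text{for each }k\in M,$$ where $\alpha^-_{hk}=\alpha-e_{2h-1}-e_{2k}$.
   Context: $\mathcal{CN}_p(\Sigma)$ has density $\varphi(z;\Sigma)=\frac{1}{\pi^p\det\Sigma}\exp(-z^*\Sigma^{-1}z)$ on $\mathbb C^p\cong\mathbb R^{2p}$; $\nu(\alpha)=\int_{\mathbb C^p}\prod_{j=1}^p z_j^{n_j}\bar z_j^{m_j}\varphi(z;\Sigma)\,dz$; $(e_j)_{j=1}^{2p}$ is the canonical basis of $\mathbb R^{2p}$. *)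

theory Defs
  imports "HOL-Analysis.Analysis"
begin

text \<open>Complex p x p matrices are modelled as complex^'n^'n with p = CARD('n).
  C^p is complex^'n, a euclidean space of real dimension 2p, with Lebesgue measure lborel.\<close>

definition hermitian_mat :: "complex^'n^'n \<Rightarrow> bool" where
  "hermitian_mat S \<longleftrightarrow> (\<forall>h k. S$h$k = cnj (S$k$h))"

definition herm_form :: "complex^'n^'n \<Rightarrow> complex^'n \<Rightarrow> complex" where
  "herm_form S z = (\<Sum>h\<in>UNIV. \<Sum>k\<in>UNIV. cnj (z$h) * S$h$k * z$k)"

definition pos_def_mat :: "complex^'n^'n \<Rightarrow> bool" where
  "pos_def_mat S \<longleftrightarrow> (\<forall>z. z \<noteq> 0 \<longrightarrow> herm_form S z \<in> \<real> \<and> Re (herm_form S z) > 0)"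

definition cn_density :: "complex^'n^'n \<Rightarrow> complex^'n \<Rightarrow> complex" where
  "cn_density S z = exp (- herm_form (matrix_inv S) z) / (of_real pi ^ CARD('n) * det S)"

text \<open>Moment nu(alpha) with alpha = (n_1,m_1,...,n_p,m_p), given by the two maps n, m.\<close>
definition cn_moment :: "complex^'n^'n \<Rightarrow> ('n \<Rightarrow> nat) \<Rightarrow> ('n \<Rightarrow> nat) \<Rightarrow> complex" where
  "cn_moment S n m = (\<integral>z. (\<Prod>j\<in>UNIV. (z$j)^(n j) * (cnj (z$j))^(m j)) * cn_density S z \<partial>lborel)"

end

theory Submission
  imports Defs "HOL-Probability.Distributions"
begin


lemma gauss1_integrable:
  fixes c :: real assumes c: "c > 0"
  shows "integrable lborel (\<lambda>x::real. exp (- c * x\<^sup>2))"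
proof -
  define sg where "sg = sqrt (1 / (2*c))"
  have s2: "sg ^ 2 = 1/(2*c)" using c by (simp add: sg_def)
  have eq: "exp (- c * x ^ 2) = sqrt (2 * pi * sg ^ 2) * normal_density 0 sg x" for x
  proof -
    have pos: "sg > 0" using c by (simp add: sg_def)
    have s3: "2 * sg ^ 2 = 1/c" using s2 by simp
    have e: "-(x-0)\<^sup>2/(2 * sg\<^sup>2) = -c*x\<^sup>2" unfolding s3 by simp
    have q: "sqrt (2 * pi * sg ^ 2) > 0" using pos by (intro real_sqrt_gt_zero mult_pos_pos) auto
    have "sqrt (2 * pi * sg ^ 2) * (1 / sqrt (2 * pi * sg ^ 2) * exp (- c * x ^ 2)) = exp (- c * x ^ 2)"
      using q pos by (simp add: field_simps)
    then show ?thesis unfolding normal_density_def e by simp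
  qed
  show ?thesis
    using c by (subst eq) (intro integrable_mult_right integrable_normal_density, simp add: sg_def)
qed

lemma norm_sq_basis:
  fixes z :: "'a::euclidean_space"
  shows "(norm z)\<^sup>2 = (\<Sum>b\<in>Basis. (z \<bullet> b)\<^sup>2)"
proof -
  have "(norm z)\<^sup>2 = z \<bullet> z" by (rule power2_norm_eq_inner)
  also have "\<dots> = (\<Sum>b\<in>Basis. (z \<bullet> b) * (z \<bullet> b))" by (rule euclidean_inner)
  finally show ?thesis by (simp add: power2_eq_square)
qed

lemma gauss_integrable:
  fixes c :: real assumes c: "c > 0"
  shows "integrable lborel (\<lambda>z::'a::euclidean_space. exp (- c * (norm z)\<^sup>2))"
proof -
  have eq: "exp (- c * (norm z)\<^sup>2) = (\<Prod>b\<in>Basis. exp (- c * (z \<bullet> b)\<^sup>2))" for z :: 'a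
    by (simp add: norm_sq_basis sum_distrib_left exp_sum[symmetric] sum_negf)
  have fin1: "(\<integral>\<^sup>+x. ennreal (exp (- c * x\<^sup>2)) \<partial>lborel) < \<infinity>"
    using gauss1_integrable[OF c] unfolding integrable_iff_bounded by simp
  have "(\<integral>\<^sup>+z. ennreal (norm (exp (- c * (norm (z::'a))\<^sup>2))) \<partial>lborel)
        = (\<integral>\<^sup>+z. (\<Prod>b\<in>Basis. ennreal (exp (- c * ((z::'a) \<bullet> b)\<^sup>2))) \<partial>lborel)"
    by (intro nn_integral_cong) (subst eq, simp add: prod_ennreal abs_prod)
  also have "\<dots> = (\<Prod>b\<in>(Basis::'a set). (\<integral>\<^sup>+x. ennreal (exp (- c * x\<^sup>2)) \<partial>lborel))"
    using nn_integral_lborel_prod[where f="\<lambda>b x. ennreal (exp (- c * x\<^sup>2))"] by simp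
  also have "\<dots> < \<infinity>"
    using fin1 by (simp add: power_less_top_ennreal)
  finally show ?thesis
    unfolding integrable_iff_bounded by simp
qed




lemma integral_translate:
  fixes g :: "'a::euclidean_space \<Rightarrow> 'b::{banach, second_countable_topology}"
  assumes "g \<in> borel_measurable borel"
  shows "integral\<^sup>L lborel (\<lambda>z. g (z + c)) = integral\<^sup>L lborel g"
proof -
  have "integral\<^sup>L lborel g = integral\<^sup>L (distr lborel borel ((+) c)) g"
    by (simp add: lborel_distr_plus)
  also have "\<dots> = integral\<^sup>L lborel (\<lambda>z. g (c + z))"
    using assms by (intro integral_distr) auto
  finally show ?thesis by (simp add: add.commute)
qed

lemma integrable_translate:
  fixes g :: "'a::euclidean_space \<Rightarrow> 'b::{banach, second_countable_topology}"
  assumes "integrable lborel g"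
  shows "integrable lborel (\<lambda>z. g (z + c))"
proof -
  have m: "g \<in> borel_measurable borel" using assms by auto
  have "integrable (distr lborel borel ((+) c)) g"
    using assms by (simp add: lborel_distr_plus)
  then have "integrable lborel (\<lambda>z. g (c + z))"
    using m by (subst (asm) integrable_distr_eq) auto
  then show ?thesis by (simp add: add.commute)
qed

lemma norm_shift_sq:
  fixes z v :: "'a::real_normed_vector" and s :: real
  assumes "0 \<le> s" "s \<le> 1"
  shows "(norm z)\<^sup>2 / 2 - (norm v)\<^sup>2 \<le> (norm (z + s *\<^sub>R v))\<^sup>2"
proof -
  have a: "norm z \<le> norm (z + s *\<^sub>R v) + norm v"
  proof -
    have "norm z \<le> norm (z + s *\<^sub>R v) + norm (s *\<^sub>R v)"
      by (metis add_diff_cancel norm_triangle_ineq4)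
    also have "norm (s *\<^sub>R v) \<le> norm v" using assms by (simp add: mult_left_le_one_le)
    finally show ?thesis by simp
  qed
  have "(norm z)\<^sup>2 \<le> (norm (z + s *\<^sub>R v) + norm v)\<^sup>2"
    using a by (simp add: power_mono)
  also have "\<dots> \<le> 2 * (norm (z + s *\<^sub>R v))\<^sup>2 + 2 * (norm v)\<^sup>2"
  proof -
    have "0 \<le> (norm (z + s *\<^sub>R v) - norm v)\<^sup>2" by simp
    then show ?thesis unfolding power2_diff power2_sum by linarith
  qed
  finally show ?thesis by simp
qed

lemma ibp_zero_real:
  fixes g gv :: "'a::euclidean_space \<Rightarrow> real" and v :: 'a
  assumes gi: "integrable lborel g"
    and gvm: "gv \<in> borel_measurable borel"
    and der: "\<And>w. ((\<lambda>t. g (w + t *\<^sub>R v)) has_real_derivative gv w) (at 0)"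
    and bnd: "\<And>w. \<bar>gv w\<bar> \<le> C * exp (- \<mu> * (norm w)\<^sup>2)"
    and mu: "\<mu> > 0"
  shows "integral\<^sup>L lborel gv = 0"
proof -
  have gm: "g \<in> borel_measurable borel" using gi by auto
  have der2: "((\<lambda>s. g (z + s *\<^sub>R v)) has_real_derivative gv (z + t *\<^sub>R v)) (at t)" for z t
  proof -
    have "((\<lambda>s. g ((z + t *\<^sub>R v) + s *\<^sub>R v)) has_real_derivative gv (z + t *\<^sub>R v)) (at 0)"
      by (rule der)
    moreover have "(\<lambda>s. g ((z + t *\<^sub>R v) + s *\<^sub>R v)) = (\<lambda>s. g (z + (s + t) *\<^sub>R v))"
      by (simp add: algebra_simps)
    ultimately have "((\<lambda>s. g (z + (s + t) *\<^sub>R v)) has_real_derivative gv (z + t *\<^sub>R v)) (at 0)"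
      by simp
    then show ?thesis
      using DERIV_shift[of "\<lambda>s. g (z + s *\<^sub>R v)" "gv (z + t *\<^sub>R v)" 0 t] by simp
  qed
  define tt where "tt = (\<lambda>n::nat. inverse (real (Suc n)))"
  have tt_pos: "tt n > 0" for n by (simp add: tt_def)
  have tt_le: "tt n \<le> 1" for n by (simp add: tt_def inverse_le_1_iff)
  have tt_lim: "filterlim tt (at 0) sequentially"
  proof (rule filterlim_atI)
    show "tt \<longlonglongrightarrow> 0" unfolding tt_def by (rule LIMSEQ_inverse_real_of_nat)
    show "\<forall>\<^sub>F x in sequentially. tt x \<noteq> 0" using tt_pos by (simp add: order_less_imp_not_eq2)
  qed
  define s where "s = (\<lambda>n z. (g (z + tt n *\<^sub>R v) - g z) / tt n)"
  define W where "W = (\<lambda>z::'a. C * exp (\<mu> * (norm v)\<^sup>2) * exp (- (\<mu>/2) * (norm z)\<^sup>2))"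
  have Wi: "integrable lborel W"
    unfolding W_def using mu by (intro integrable_mult_right gauss_integrable) auto
  have lim: "(\<lambda>n. s n z) \<longlonglongrightarrow> gv z" for z
  proof -
    have "((\<lambda>y. (g (z + y *\<^sub>R v) - g (z + 0 *\<^sub>R v)) / (y - 0)) \<longlongrightarrow> gv (z + 0 *\<^sub>R v)) (at 0)"
      using der2[of z 0] by (simp only: has_field_derivative_iff)
    then have "((\<lambda>y. (g (z + y *\<^sub>R v) - g z) / y) \<longlongrightarrow> gv z) (at 0)" by simp
    from filterlim_compose[OF this tt_lim] show ?thesis by (simp add: s_def o_def)
  qed
  have bound: "norm (s n z) \<le> W z" for n z
  proof -
    obtain \<xi> where xi: "0 < \<xi>" "\<xi> < tt n"
      "g (z + tt n *\<^sub>R v) - g (z + 0 *\<^sub>R v) = (tt n - 0) * gv (z + \<xi> *\<^sub>R v)"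
      using MVT2[of 0 "tt n" "\<lambda>s. g (z + s *\<^sub>R v)" "\<lambda>t. gv (z + t *\<^sub>R v)"] der2 tt_pos by blast
    have "norm (s n z) = \<bar>gv (z + \<xi> *\<^sub>R v)\<bar>"
      using xi tt_pos[of n] by (simp add: s_def)
    also have "\<dots> \<le> C * exp (- \<mu> * (norm (z + \<xi> *\<^sub>R v))\<^sup>2)" by (rule bnd)
    also have "\<dots> \<le> W z"
    proof -
      have "0 \<le> C * exp (- \<mu> * (norm (0::'a))\<^sup>2)" using bnd[of 0] abs_ge_zero order_trans by blast
      then have C: "C \<ge> 0" by (simp add: zero_le_mult_iff)
      have "(norm z)\<^sup>2 / 2 - (norm v)\<^sup>2 \<le> (norm (z + \<xi> *\<^sub>R v))\<^sup>2"
        using xi tt_le[of n] by (intro norm_shift_sq) auto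
      then have "\<mu> * ((norm z)\<^sup>2 / 2 - (norm v)\<^sup>2) \<le> \<mu> * (norm (z + \<xi> *\<^sub>R v))\<^sup>2"
        using mu by (intro mult_left_mono) auto
      then have "- \<mu> * (norm (z + \<xi> *\<^sub>R v))\<^sup>2 \<le> \<mu> * (norm v)\<^sup>2 + (- (\<mu>/2) * (norm z)\<^sup>2)"
        by (simp add: algebra_simps)
      then have "exp (- \<mu> * (norm (z + \<xi> *\<^sub>R v))\<^sup>2) \<le> exp (\<mu> * (norm v)\<^sup>2) * exp (- (\<mu>/2) * (norm z)\<^sup>2)"
        by (simp add: exp_add[symmetric])
      then show ?thesis unfolding W_def using C by (simp add: mult.assoc mult_left_mono)
    qed
    finally show ?thesis .
  qed
  have sm: "s n \<in> borel_measurable borel" for n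
    unfolding s_def using gm by measurable
  have "(\<lambda>n. integral\<^sup>L lborel (s n)) \<longlonglongrightarrow> integral\<^sup>L lborel gv"
    by (rule integral_dominated_convergence[where w=W]) (use gvm sm Wi lim bound in auto)
  moreover have "integral\<^sup>L lborel (s n) = 0" for n
  proof -
    have "integral\<^sup>L lborel (s n) = (integral\<^sup>L lborel (\<lambda>z. g (z + tt n *\<^sub>R v)) - integral\<^sup>L lborel g) / tt n"
      unfolding s_def using gi integrable_translate[OF gi] by simp
    also have "\<dots> = 0" using integral_translate[OF gm] by simp
    finally show ?thesis .
  qed
  ultimately show ?thesis by (simp add: LIMSEQ_const_iff)
qed

lemma ibp_zero:
  fixes g gv :: "'a::euclidean_space \<Rightarrow> complex" and v :: 'a
  assumes gi: "integrable lborel g"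
    and gvm: "gv \<in> borel_measurable borel"
    and der: "\<And>w. ((\<lambda>t. g (w + t *\<^sub>R v)) has_vector_derivative gv w) (at 0)"
    and bnd: "\<And>w. norm (gv w) \<le> C * exp (- \<mu> * (norm w)\<^sup>2)"
    and mu: "\<mu> > 0"
  shows "integral\<^sup>L lborel gv = 0"
proof -
  have I: "integrable lborel (\<lambda>w::'a. C * exp (- \<mu> * (norm w)\<^sup>2))"
    using mu by (intro integrable_mult_right gauss_integrable) auto
  have B: "AE x in lborel. norm (gv x) \<le> norm (C * exp (- \<mu> * (norm x)\<^sup>2))"
    using bnd by (auto intro: order_trans[OF _ abs_ge_self])
  have gvi: "integrable lborel gv"
    by (rule Bochner_Integration.integrable_bound[OF I _ B]) (use gvm in auto)
  have "integral\<^sup>L lborel (\<lambda>w. Re (gv w)) = 0"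
  proof (rule ibp_zero_real[where g="\<lambda>w. Re (g w)" and v=v and C=C and \<mu>=\<mu>])
    show "((\<lambda>t. Re (g (w + t *\<^sub>R v))) has_real_derivative Re (gv w)) (at 0)" for w
      using der[of w] by (simp add: has_vector_derivative_complex_iff)
    show "\<bar>Re (gv w)\<bar> \<le> C * exp (- \<mu> * (norm w)\<^sup>2)" for w
      using bnd[of w] abs_Re_le_cmod[of "gv w"] by linarith
  qed (use gi gvm mu in auto)
  moreover have "integral\<^sup>L lborel (\<lambda>w. Im (gv w)) = 0"
  proof (rule ibp_zero_real[where g="\<lambda>w. Im (g w)" and v=v and C=C and \<mu>=\<mu>])
    show "((\<lambda>t. Im (g (w + t *\<^sub>R v))) has_real_derivative Im (gv w)) (at 0)" for w
      using der[of w] by (simp add: has_vector_derivative_complex_iff)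
    show "\<bar>Im (gv w)\<bar> \<le> C * exp (- \<mu> * (norm w)\<^sup>2)" for w
      using bnd[of w] abs_Im_le_cmod[of "gv w"] by linarith
  qed (use gi gvm mu in auto)
  ultimately show ?thesis
    using gvi by (simp add: complex_eq_iff)
qed




lemma herm_form_mv: "herm_form S x = (\<Sum>h\<in>UNIV. cnj (x$h) * (S *v x)$h)"
  by (simp add: herm_form_def matrix_vector_mult_def sum_distrib_left mult.assoc)

lemma herm_form_scale: "herm_form S (r *\<^sub>R x) = of_real (r\<^sup>2) * herm_form S x"
proof -
  have comp: "(r *\<^sub>R x)$h = complex_of_real r * x$h" for h
    by (subst vector_scaleR_component) (rule scaleR_conv_of_real)
  show ?thesis unfolding herm_form_def comp
    by (simp add: sum_distrib_left power2_eq_square algebra_simps)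
qed

lemma herm_form_zero[simp]: "herm_form S 0 = 0"
  by (simp add: herm_form_def)

lemma continuous_herm_form: "continuous_on X (herm_form S)"
  unfolding herm_form_def by (intro continuous_intros)

lemma pos_lower:
  fixes S :: "complex^'n^'n"
  assumes "pos_def_mat S"
  shows "\<exists>l>0. \<forall>w. Re (herm_form S w) \<ge> l * (norm w)\<^sup>2"
proof -
  have ne: "sphere (0::complex^'n) 1 \<noteq> {}"
  proof -
    have "axis undefined 1 \<in> sphere (0::complex^'n) 1" by (simp add: norm_axis_1)
    then show ?thesis by blast
  qed
  have "continuous_on (sphere 0 1) (\<lambda>w::complex^'n. Re (herm_form S w))"
    by (intro continuous_intros continuous_on_compose2[OF continuous_herm_form]) auto
  then obtain x0 where x0: "x0 \<in> sphere 0 1" "\<And>y. y \<in> sphere 0 1 \<Longrightarrow> Re (herm_form S x0) \<le> Re (herm_form S y)"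
    using continuous_attains_inf[OF compact_sphere ne] by blast
  define l where "l = Re (herm_form S x0)"
  have "x0 \<noteq> 0" using x0 by auto
  then have lpos: "l > 0" using assms unfolding pos_def_mat_def l_def by auto
  have "Re (herm_form S w) \<ge> l * (norm w)\<^sup>2" for w
  proof (cases "w = 0")
    case True then show ?thesis by simp
  next
    case False
    define u where "u = inverse (norm w) *\<^sub>R w"
    have u: "u \<in> sphere 0 1" using False by (simp add: u_def)
    have w: "w = norm w *\<^sub>R u" using False by (simp add: u_def)
    have "Re (herm_form S w) = (norm w)\<^sup>2 * Re (herm_form S u)"
      by (subst w, simp add: herm_form_scale)
    also have "\<dots> \<ge> (norm w)\<^sup>2 * l"
      using x0(2)[OF u] by (simp add: l_def mult_left_mono)
    finally show ?thesis by (simp add: mult.commute)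
  qed
  with lpos show ?thesis by blast
qed

lemma inv_mat:
  fixes S :: "complex^'n^'n"
  assumes "pos_def_mat S"
  shows "S ** matrix_inv S = mat 1 \<and> matrix_inv S ** S = mat 1"
proof -
  have "\<forall>x. S *v x = 0 \<longrightarrow> x = 0"
  proof (intro allI impI)
    fix x assume "S *v x = 0"
    then have "herm_form S x = 0" by (simp add: herm_form_mv)
    then show "x = 0" using assms unfolding pos_def_mat_def by (metis less_irrefl zero_complex.sel(1))
  qed
  then have "invertible S"
    using matrix_left_invertible_ker invertible_left_inverse by blast
  then show ?thesis
    unfolding invertible_def matrix_inv_def by (rule someI_ex)
qed

lemma Q_conj:
  fixes S A :: "complex^'n^'n"
  assumes "S ** A = mat 1"
  shows "herm_form A z = cnj (herm_form S (A *v z))"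
proof -
  have "S *v (A *v z) = z" using assms by (simp add: matrix_vector_mul_assoc)
  then have "herm_form S (A *v z) = (\<Sum>h\<in>UNIV. cnj ((A *v z)$h) * z$h)"
    by (simp add: herm_form_mv)
  also have "\<dots> = (\<Sum>h\<in>UNIV. \<Sum>k\<in>UNIV. cnj (A$h$k * z$k) * z$h)"
    by (simp add: matrix_vector_mult_def sum_distrib_right)
  finally have "cnj (herm_form S (A *v z)) = (\<Sum>h\<in>UNIV. \<Sum>k\<in>UNIV. A$h$k * z$k * cnj (z$h))"
    by simp
  also have "\<dots> = herm_form A z"
    unfolding herm_form_def by (intro sum.cong refl) (simp add: ac_simps)
  finally show ?thesis by simp
qed

lemma Q_lower:
  fixes S :: "complex^'n^'n"
  assumes "pos_def_mat S"
  shows "\<exists>l>0. \<forall>z. Re (herm_form (matrix_inv S) z) \<ge> l * (norm z)\<^sup>2"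
proof -
  define A where "A = matrix_inv S"
  have SA: "S ** A = mat 1" using inv_mat[OF assms] by (simp add: A_def)
  obtain l0 where l0: "l0 > 0" "\<And>w. Re (herm_form S w) \<ge> l0 * (norm w)\<^sup>2"
    using pos_lower[OF assms] by blast
  obtain K where K: "K > 0" "\<And>x. norm (S *v x) \<le> norm x * K"
    using bounded_linear.pos_bounded[OF matrix_vector_mul_bounded_linear[of S]] by blast
  have "Re (herm_form A z) \<ge> (l0 / K\<^sup>2) * (norm z)\<^sup>2" for z
  proof -
    have "S *v (A *v z) = z" using SA by (simp add: matrix_vector_mul_assoc)
    then have "norm z \<le> norm (A *v z) * K" using K(2)[of "A *v z"] by simp
    then have "norm z / K \<le> norm (A *v z)" using K(1) by (simp add: divide_le_eq)
    then have "(norm z / K)\<^sup>2 \<le> (norm (A *v z))\<^sup>2"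
      using K(1) by (intro power_mono) auto
    then have "l0 * (norm z / K)\<^sup>2 \<le> l0 * (norm (A *v z))\<^sup>2"
      using l0(1) by (intro mult_left_mono) auto
    also have "\<dots> \<le> Re (herm_form S (A *v z))" by (rule l0(2))
    also have "\<dots> = Re (herm_form A z)" using Q_conj[OF SA] by simp
    finally show ?thesis by (simp add: power_divide)
  qed
  moreover have "l0 / K\<^sup>2 > 0" using l0 K by simp
  ultimately show ?thesis unfolding A_def by blast
qed




definition pg :: "('a::real_normed_vector \<Rightarrow> complex) \<Rightarrow> bool" where
  "pg F \<longleftrightarrow> (\<exists>C N. C \<ge> 0 \<and> (\<forall>z. norm (F z) \<le> C * (1 + norm z) ^ N))"

lemma pow_mono_exp:
  fixes r :: real assumes "r \<ge> 0" "N1 \<le> N2"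
  shows "(1 + r) ^ N1 \<le> (1 + r) ^ N2"
  using assms by (intro power_increasing) auto

lemma pg_const[simp]: "pg (\<lambda>z. c)"
  unfolding pg_def by (rule exI[of _ "norm c"], rule exI[of _ 0]) simp

lemma pg_nth: "pg (\<lambda>z::complex^'n. z$j)"
  unfolding pg_def
proof (rule exI[of _ 1], rule exI[of _ 1], intro conjI allI)
  fix z :: "complex^'n"
  have "norm (z$j) \<le> norm z" by (rule Finite_Cartesian_Product.norm_nth_le)
  then show "norm (z$j) \<le> 1 * (1 + norm z) ^ 1" by simp
qed simp

lemma pg_cnj: "pg F \<Longrightarrow> pg (\<lambda>z. cnj (F z))"
  unfolding pg_def by simp

lemma pg_add:
  assumes "pg F" "pg G" shows "pg (\<lambda>z. F z + G z)"
proof -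
  obtain C1 N1 where 1: "C1 \<ge> 0" "\<And>z. norm (F z) \<le> C1 * (1 + norm z) ^ N1" using assms(1) unfolding pg_def by blast
  obtain C2 N2 where 2: "C2 \<ge> 0" "\<And>z. norm (G z) \<le> C2 * (1 + norm z) ^ N2" using assms(2) unfolding pg_def by blast
  have "norm (F z + G z) \<le> (C1 + C2) * (1 + norm z) ^ (N1 + N2)" for z
  proof -
    have "norm (F z + G z) \<le> C1 * (1 + norm z) ^ N1 + C2 * (1 + norm z) ^ N2"
      using norm_triangle_ineq[of "F z" "G z"] 1(2)[of z] 2(2)[of z] by linarith
    also have "\<dots> \<le> C1 * (1 + norm z) ^ (N1 + N2) + C2 * (1 + norm z) ^ (N1 + N2)"
      using 1(1) 2(1) by (intro add_mono mult_left_mono pow_mono_exp) auto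
    finally show ?thesis by (simp add: algebra_simps)
  qed
  then show ?thesis unfolding pg_def using 1(1) 2(1) by (intro exI[of _ "C1 + C2"] exI[of _ "N1 + N2"]) auto
qed

lemma pg_mult:
  assumes "pg F" "pg G" shows "pg (\<lambda>z. F z * G z)"
proof -
  obtain C1 N1 where 1: "C1 \<ge> 0" "\<And>z. norm (F z) \<le> C1 * (1 + norm z) ^ N1" using assms(1) unfolding pg_def by blast
  obtain C2 N2 where 2: "C2 \<ge> 0" "\<And>z. norm (G z) \<le> C2 * (1 + norm z) ^ N2" using assms(2) unfolding pg_def by blast
  have "norm (F z * G z) \<le> (C1 * C2) * (1 + norm z) ^ (N1 + N2)" for z
  proof -
    have "norm (F z * G z) = norm (F z) * norm (G z)" by (simp add: norm_mult)
    also have "\<dots> \<le> (C1 * (1 + norm z) ^ N1) * (C2 * (1 + norm z) ^ N2)"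
      using 1 2 by (intro mult_mono) auto
    finally show ?thesis by (simp add: algebra_simps power_add)
  qed
  then show ?thesis unfolding pg_def using 1(1) 2(1) by (intro exI[of _ "C1 * C2"] exI[of _ "N1 + N2"]) auto
qed

lemma pg_minus: "pg F \<Longrightarrow> pg (\<lambda>z. - F z)"
  unfolding pg_def by simp

lemma pg_diff: "pg F \<Longrightarrow> pg G \<Longrightarrow> pg (\<lambda>z. F z - G z)"
  using pg_add[of F "\<lambda>z. - G z"] pg_minus[of G] by simp

lemma pg_sum: "finite A \<Longrightarrow> (\<And>i. i \<in> A \<Longrightarrow> pg (F i)) \<Longrightarrow> pg (\<lambda>z. \<Sum>i\<in>A. F i z)"
  by (induction A rule: finite_induct) (auto intro: pg_add)

lemma pg_prod: "finite A \<Longrightarrow> (\<And>i. i \<in> A \<Longrightarrow> pg (F i)) \<Longrightarrow> pg (\<lambda>z. \<Prod>i\<in>A. F i z)"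
  by (induction A rule: finite_induct) (auto intro: pg_mult)

lemma pg_pow: "pg F \<Longrightarrow> pg (\<lambda>z. F z ^ k)"
  by (induction k) (auto intro: pg_mult)

lemma poly_gauss:
  fixes l :: real assumes l: "l > 0"
  shows "\<exists>K. \<forall>r\<ge>0. (1 + r) ^ N * exp (- l * r\<^sup>2) \<le> K * exp (- (l/2) * r\<^sup>2)"
proof -
  define a where "a = l / (2 * (real N + 1))"
  have a: "a > 0" using l by (simp add: a_def)
  define B where "B = 2 + 1 / a"
  have Bpos: "B \<ge> 0" using a by (simp add: B_def)
  have "(1 + r) ^ N * exp (- l * r\<^sup>2) \<le> B ^ N * exp (- (l/2) * r\<^sup>2)" if r: "r \<ge> 0" for r
  proof -
    have "1 + r \<le> 2 + r\<^sup>2"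
    proof -
      have "0 \<le> (r - 1/2)\<^sup>2" by simp
      then show ?thesis by (simp add: power2_eq_square algebra_simps)
    qed
    also have "\<dots> \<le> B * (1 + a * r\<^sup>2)"
      using a r by (simp add: B_def algebra_simps)
    also have "\<dots> \<le> B * exp (a * r\<^sup>2)"
      using Bpos by (intro mult_left_mono) (auto simp: add.commute exp_ge_add_one_self)
    finally have 1: "1 + r \<le> B * exp (a * r\<^sup>2)" .
    have "(1 + r) ^ N \<le> (B * exp (a * r\<^sup>2)) ^ N"
      using 1 r by (intro power_mono) auto
    also have "\<dots> = B ^ N * exp (real N * a * r\<^sup>2)"
      by (simp add: power_mult_distrib exp_of_nat_mult[symmetric] mult.assoc)
    finally have 2: "(1 + r) ^ N \<le> B ^ N * exp (real N * a * r\<^sup>2)" .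
    have 3: "real N * a * r\<^sup>2 \<le> (l/2) * r\<^sup>2"
    proof (intro mult_right_mono)
      show "real N * a \<le> l / 2" using l by (simp add: a_def field_simps)
    qed simp
    have "(1 + r) ^ N * exp (- l * r\<^sup>2) \<le> B ^ N * exp (real N * a * r\<^sup>2) * exp (- l * r\<^sup>2)"
      using 2 by (intro mult_right_mono) auto
    also have "\<dots> = B ^ N * exp (real N * a * r\<^sup>2 - l * r\<^sup>2)"
      by (simp add: exp_diff exp_minus field_simps)
    also have "\<dots> \<le> B ^ N * exp (- (l/2) * r\<^sup>2)"
      using 3 Bpos by (intro mult_left_mono) auto
    finally show ?thesis .
  qed
  then show ?thesis by blast
qed

lemma pg_gauss:
  fixes F Q :: "'a::real_normed_vector \<Rightarrow> complex"
  assumes "pg F" and l: "l > 0" and Q: "\<And>z. Re (Q z) \<ge> l * (norm z)\<^sup>2"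
  shows "\<exists>K. \<forall>z. norm (F z * exp (- Q z)) \<le> K * exp (- (l/2) * (norm z)\<^sup>2)"
proof -
  obtain C N where C: "C \<ge> 0" "\<And>z. norm (F z) \<le> C * (1 + norm z) ^ N" using assms(1) unfolding pg_def by blast
  obtain K where K: "\<And>r. r \<ge> 0 \<Longrightarrow> (1 + r) ^ N * exp (- l * r\<^sup>2) \<le> K * exp (- (l/2) * r\<^sup>2)"
    using poly_gauss[OF l] by blast
  have "norm (F z * exp (- Q z)) \<le> (C * K) * exp (- (l/2) * (norm z)\<^sup>2)" for z
  proof -
    have "norm (F z * exp (- Q z)) = norm (F z) * exp (- Re (Q z))" by (simp add: norm_mult)
    also have "\<dots> \<le> (C * (1 + norm z) ^ N) * exp (- l * (norm z)\<^sup>2)"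
      using C Q[of z] by (intro mult_mono) auto
    also have "\<dots> = C * ((1 + norm z) ^ N * exp (- l * (norm z)\<^sup>2))" by simp
    also have "\<dots> \<le> C * (K * exp (- (l/2) * (norm z)\<^sup>2))"
      using C K[of "norm z"] by (intro mult_left_mono) auto
    finally show ?thesis by simp
  qed
  then show ?thesis by blast
qed

lemma pg_integrable:
  fixes F Q :: "'a::euclidean_space \<Rightarrow> complex"
  assumes "pg F" and l: "l > 0" and Q: "\<And>z. Re (Q z) \<ge> l * (norm z)\<^sup>2"
    and cF: "continuous_on UNIV F" and cQ: "continuous_on UNIV Q"
  shows "integrable lborel (\<lambda>z. F z * exp (- Q z))"
proof -
  obtain K where K: "\<And>z. norm (F z * exp (- Q z)) \<le> K * exp (- (l/2) * (norm z)\<^sup>2)"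
    using pg_gauss[OF assms(1-3)] by blast
  have I: "integrable lborel (\<lambda>z::'a. K * exp (- (l/2) * (norm z)\<^sup>2))"
    using l by (intro integrable_mult_right gauss_integrable) auto
  have M: "(\<lambda>z. F z * exp (- Q z)) \<in> borel_measurable borel"
    by (intro borel_measurable_continuous_onI continuous_intros cF cQ)
  show ?thesis
    by (rule Bochner_Integration.integrable_bound[OF I]) (use M K in \<open>auto intro: order_trans[OF _ abs_ge_self]\<close>)
qed




definition mnm :: "('n::finite \<Rightarrow> nat) \<Rightarrow> ('n \<Rightarrow> nat) \<Rightarrow> complex^'n \<Rightarrow> complex" where
  "mnm n m z = (\<Prod>j\<in>UNIV. (z$j)^(n j) * (cnj (z$j))^(m j))"

definition Lf :: "complex^'n^'n \<Rightarrow> complex^'n \<Rightarrow> complex^'n \<Rightarrow> complex" where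
  "Lf A w v = (\<Sum>h\<in>UNIV. \<Sum>k\<in>UNIV. cnj (v$h) * A$h$k * w$k + cnj (w$h) * A$h$k * v$k)"

definition dmono :: "('n::finite \<Rightarrow> nat) \<Rightarrow> ('n \<Rightarrow> nat) \<Rightarrow> complex^'n \<Rightarrow> complex^'n \<Rightarrow> complex" where
  "dmono n m w v = (\<Sum>j\<in>UNIV. of_nat (n j) * v$j * mnm (n(j := n j - 1)) m w
                          + of_nat (m j) * cnj (v$j) * mnm n (m(j := m j - 1)) w)"

lemma comp_line: "(w + t *\<^sub>R v)$h = w$h + complex_of_real t * v$h"
proof -
  have "(w + t *\<^sub>R v)$h = w$h + t *\<^sub>R (v$h)" by simp
  then show ?thesis by (simp only: scaleR_conv_of_real[of t "v$h"])
qed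

lemma herm_form_line:
  "herm_form A (w + t *\<^sub>R v) = herm_form A w + of_real t * Lf A w v + (of_real t)\<^sup>2 * herm_form A v"
  unfolding herm_form_def Lf_def comp_line
  by (simp add: algebra_simps sum.distrib sum_distrib_left power2_eq_square)

lemma mnm_line: "mnm n m (w + t *\<^sub>R v) =
   (\<Prod>j\<in>UNIV. (w$j + of_real t * v$j)^(n j) * (cnj (w$j) + of_real t * cnj (v$j))^(m j))"
  unfolding mnm_def comp_line by simp

lemma mnm_remove:
  "mnm n m w = (w$j)^(n j) * cnj (w$j)^(m j) * (\<Prod>i\<in>UNIV-{j}. (w$i)^(n i) * cnj (w$i)^(m i))"
  unfolding mnm_def by (subst prod.remove[of UNIV j]) auto

lemma rest_upd: 
  "(\<Prod>i\<in>UNIV-{j}. (w$i)^((n(j:=a)) i) * cnj (w$i)^((m(j:=b)) i))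
   = (\<Prod>i\<in>UNIV-{j}. (w$i)^(n i) * cnj (w$i)^(m i))"
  by (intro prod.cong) auto

lemma P_deriv:
  fixes w v :: "complex^'n"
  shows "((\<lambda>s. \<Prod>j\<in>UNIV. (w$j + s * v$j)^(n j) * (cnj (w$j) + s * cnj (v$j))^(m j))
           has_field_derivative dmono n m w v) (at 0)"
proof -
  define R where "R = (\<lambda>j. \<Prod>i\<in>UNIV-{j}. (w$i)^(n i) * cnj (w$i)^(m i))"
  define f' where "f' = (\<lambda>j. of_nat (n j) * (w$j)^(n j - 1) * v$j * cnj (w$j)^(m j)
        + (w$j)^(n j) * (of_nat (m j) * cnj (w$j)^(m j - 1) * cnj (v$j)))"
  have d: "((\<lambda>s. (w$j + s * v$j)^(n j) * (cnj (w$j) + s * cnj (v$j))^(m j)) has_field_derivative f' j) (at 0)" for j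
    unfolding f'_def by (auto intro!: derivative_eq_intros)
  note has_field_derivative_prod[of UNIV "\<lambda>j s. (w$j + s * v$j)^(n j) * (cnj (w$j) + s * cnj (v$j))^(m j)" f' 0, OF d]
  moreover have "(\<Sum>x\<in>UNIV. f' x * (\<Prod>y\<in>UNIV - {x}. (w$y + 0 * v$y)^(n y) * (cnj (w$y) + 0 * cnj (v$y))^(m y)))
      = dmono n m w v"
    unfolding dmono_def
  proof (intro sum.cong refl)
    fix j
    have e1: "mnm (n(j := n j - 1)) m w = (w$j)^(n j - 1) * cnj (w$j)^(m j) * R j"
      using mnm_remove[of "n(j := n j - 1)" m w j] rest_upd[of w n j "n j - 1" m "m j"] by (simp add: R_def)
    have e2: "mnm n (m(j := m j - 1)) w = (w$j)^(n j) * cnj (w$j)^(m j - 1) * R j"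
      using mnm_remove[of n "m(j := m j - 1)" w j] rest_upd[of w n j "n j" m "m j - 1"] by (simp add: R_def)
    show "f' j * (\<Prod>y\<in>UNIV - {j}. (w$y + 0 * v$y)^(n y) * (cnj (w$y) + 0 * cnj (v$y))^(m y)) =
        of_nat (n j) * v$j * mnm (n(j := n j - 1)) m w + of_nat (m j) * cnj (v$j) * mnm n (m(j := m j - 1)) w"
      unfolding e1 e2 by (simp add: f'_def R_def algebra_simps)
  qed
  ultimately show ?thesis by simp
qed

lemma g_deriv:
  fixes w v :: "complex^'n" and A :: "complex^'n^'n"
  shows "((\<lambda>t. mnm n m (w + t *\<^sub>R v) * exp (- herm_form A (w + t *\<^sub>R v)))
      has_vector_derivative ((dmono n m w v - mnm n m w * Lf A w v) * exp (- herm_form A w))) (at 0)"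
proof -
  define P where "P = (\<lambda>s. \<Prod>j\<in>UNIV. (w$j + s * v$j)^(n j) * (cnj (w$j) + s * cnj (v$j))^(m j))"
  define \<Psi> where "\<Psi> = (\<lambda>s. P s * exp (- (herm_form A w + s * Lf A w v + s\<^sup>2 * herm_form A v)))"
  have P0: "P 0 = mnm n m w" by (simp add: P_def mnm_def)
  have dP: "(P has_field_derivative dmono n m w v) (at 0)"
    unfolding P_def by (rule P_deriv)
  have "(\<Psi> has_field_derivative ((dmono n m w v - mnm n m w * Lf A w v) * exp (- herm_form A w))) (at 0)"
    unfolding \<Psi>_def
    by (rule derivative_eq_intros dP refl | simp)+ (simp add: P0 algebra_simps)
  then have "((\<lambda>x. \<Psi> (of_real x)) has_vector_derivative ((dmono n m w v - mnm n m w * Lf A w v) * exp (- herm_form A w))) (at 0)"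
    using has_vector_derivative_real_field[of \<Psi> _ 0] by simp
  moreover have "\<Psi> (of_real t) = mnm n m (w + t *\<^sub>R v) * exp (- herm_form A (w + t *\<^sub>R v))" for t
    by (simp add: \<Psi>_def P_def mnm_line herm_form_line)
  ultimately show ?thesis by simp
qed




lemma pg_mnm: "pg (mnm n m)"
  unfolding mnm_def by (intro pg_prod pg_mult pg_pow pg_nth pg_cnj) auto

lemma cont_mnm: "continuous_on X (mnm n m)"
  unfolding mnm_def by (intro continuous_intros)

lemma pg_dmono: "pg (\<lambda>z. dmono n m z v)"
  unfolding dmono_def by (intro pg_sum pg_add pg_mult pg_const pg_mnm) auto

lemma cont_dmono: "continuous_on X (\<lambda>z. dmono n m z v)"
  unfolding dmono_def by (intro continuous_intros cont_mnm)

lemma pg_Lf: "pg (\<lambda>z. Lf A z v)"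
  unfolding Lf_def by (intro pg_sum pg_add pg_mult pg_const pg_nth pg_cnj) auto

lemma cont_Lf: "continuous_on X (\<lambda>z. Lf A z v)"
  unfolding Lf_def by (intro continuous_intros)

lemma cont_Q: "continuous_on X (herm_form A)"
  by (rule continuous_herm_form)

context
  fixes A :: "complex^'n^'n" and l :: real
  assumes l: "l > 0" and Ql: "\<And>z. Re (herm_form A z) \<ge> l * (norm z)\<^sup>2"
begin

lemma T_int: "integrable lborel (\<lambda>z. mnm n m z * exp (- herm_form A z))"
  by (rule pg_integrable[OF pg_mnm l Ql cont_mnm cont_Q])

lemma ibp_dir:
  shows "integrable lborel (\<lambda>z. (dmono n m z v - mnm n m z * Lf A z v) * exp (- herm_form A z))"
    and "integral\<^sup>L lborel (\<lambda>z. (dmono n m z v - mnm n m z * Lf A z v) * exp (- herm_form A z)) = 0"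
proof -
  have pgF: "pg (\<lambda>z. dmono n m z v - mnm n m z * Lf A z v)"
    by (intro pg_diff pg_mult pg_dmono pg_mnm pg_Lf)
  have cF: "continuous_on UNIV (\<lambda>z. dmono n m z v - mnm n m z * Lf A z v)"
    by (intro continuous_intros cont_dmono cont_mnm cont_Lf)
  show "integrable lborel (\<lambda>z. (dmono n m z v - mnm n m z * Lf A z v) * exp (- herm_form A z))"
    by (rule pg_integrable[OF pgF l Ql cF cont_Q])
  obtain K where K: "\<And>z. norm ((dmono n m z v - mnm n m z * Lf A z v) * exp (- herm_form A z)) \<le> K * exp (- (l/2) * (norm z)\<^sup>2)"
    using pg_gauss[OF pgF l Ql] by blast
  show "integral\<^sup>L lborel (\<lambda>z. (dmono n m z v - mnm n m z * Lf A z v) * exp (- herm_form A z)) = 0"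
  proof (rule ibp_zero[where g="\<lambda>z. mnm n m z * exp (- herm_form A z)" and v=v and C=K and \<mu>="l/2"])
    show "integrable lborel (\<lambda>z. mnm n m z * exp (- herm_form A z))" by (rule T_int)
    show "(\<lambda>z. (dmono n m z v - mnm n m z * Lf A z v) * exp (- herm_form A z)) \<in> borel_measurable borel"
      by (intro borel_measurable_continuous_onI continuous_intros cF cont_Q)
    show "((\<lambda>t. mnm n m (w + t *\<^sub>R v) * exp (- herm_form A (w + t *\<^sub>R v))) has_vector_derivative
        (dmono n m w v - mnm n m w * Lf A w v) * exp (- herm_form A w)) (at 0)" for w
      by (rule g_deriv)
  qed (use K l in auto)
qed

end




lemma mnm_succ_n:
  assumes "n h \<noteq> 0"
  shows "mnm (n(h := n h - 1)) m z * z$h = mnm n m z"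
proof -
  obtain k where k: "n h = Suc k" using assms not0_implies_Suc by blast
  show ?thesis
    using mnm_remove[of "n(h := n h - 1)" m z h] mnm_remove[of n m z h]
      rest_upd[of z n h "n h - 1" m "m h"] k by (simp add: algebra_simps)
qed

lemma mnm_succ_m:
  assumes "m h \<noteq> 0"
  shows "mnm n (m(h := m h - 1)) z * cnj (z$h) = mnm n m z"
proof -
  obtain k where k: "m h = Suc k" using assms not0_implies_Suc by blast
  show ?thesis
    using mnm_remove[of n "m(h := m h - 1)" z h] mnm_remove[of n m z h]
      rest_upd[of z n h "n h" m "m h - 1"] k by (simp add: algebra_simps)
qed

lemma comb_dmono1:
  fixes S :: "complex^'n^'n"
  shows "dmono n m z (\<chi> j. cnj (S$h0$j)) + \<i> * dmono n m z (\<chi> j. \<i> * cnj (S$h0$j))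
     = 2 * (\<Sum>j\<in>UNIV. of_nat (m j) * S$h0$j * mnm n (m(j := m j - 1)) z)"
  unfolding dmono_def sum_distrib_left sum.distrib[symmetric]
  by (intro sum.cong refl) (simp add: algebra_simps)

lemma comb_dmono2:
  fixes S :: "complex^'n^'n"
  shows "dmono n m z (\<chi> j. S$j$k0) - \<i> * dmono n m z (\<chi> j. \<i> * S$j$k0)
     = 2 * (\<Sum>j\<in>UNIV. of_nat (n j) * S$j$k0 * mnm (n(j := n j - 1)) m z)"
  unfolding dmono_def sum_distrib_left sum_subtractf[symmetric]
  by (intro sum.cong refl) (simp add: algebra_simps)



lemma Lf_lin:
  "Lf A z v + c * Lf A z w = (\<Sum>h\<in>UNIV. \<Sum>k\<in>UNIV.
     (cnj (v$h) * A$h$k * z$k + cnj (z$h) * A$h$k * v$k) + c * (cnj (w$h) * A$h$k * z$k + cnj (z$h) * A$h$k * w$k))"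
  unfolding Lf_def by (simp add: sum_distrib_left sum.distrib distrib_left)

lemma mat1_sum: "(\<Sum>k\<in>UNIV. c * (mat 1 :: complex^'n^'n)$i$k * f k) = c * f i"
proof -
  have "(\<Sum>k\<in>UNIV. c * (mat 1 :: complex^'n^'n)$i$k * f k) = (\<Sum>k\<in>UNIV. if k = i then c * f k else 0)"
    by (intro sum.cong) (auto simp: mat_def)
  then show ?thesis by simp
qed

lemma mat1_sum': "(\<Sum>k\<in>UNIV. c * f k * (mat 1 :: complex^'n^'n)$k$i) = c * f i"
proof -
  have "(\<Sum>k\<in>UNIV. c * f k * (mat 1 :: complex^'n^'n)$k$i) = (\<Sum>k\<in>UNIV. if k = i then c * f k else 0)"
    by (intro sum.cong) (auto simp: mat_def)
  then show ?thesis by simp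
qed

lemma comb_Lf1:
  fixes S A :: "complex^'n^'n"
  assumes SA: "S ** A = mat 1"
  shows "Lf A z (\<chi> j. cnj (S$h0$j)) + \<i> * Lf A z (\<chi> j. \<i> * cnj (S$h0$j)) = 2 * z$h0"
proof -
  have t: "(cnj ((\<chi> j. cnj (S$h0$j))$h) * A$h$k * z$k + cnj (z$h) * A$h$k * (\<chi> j. cnj (S$h0$j))$k)
      + \<i> * (cnj ((\<chi> j. \<i> * cnj (S$h0$j))$h) * A$h$k * z$k + cnj (z$h) * A$h$k * (\<chi> j. \<i> * cnj (S$h0$j))$k)
      = 2 * (S$h0$h * A$h$k) * z$k" for h k
    by (simp add: algebra_simps)
  have "Lf A z (\<chi> j. cnj (S$h0$j)) + \<i> * Lf A z (\<chi> j. \<i> * cnj (S$h0$j))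
      = (\<Sum>h\<in>UNIV. \<Sum>k\<in>UNIV. 2 * (S$h0$h * A$h$k) * z$k)"
    unfolding Lf_lin t ..
  also have "\<dots> = (\<Sum>k\<in>UNIV. \<Sum>h\<in>UNIV. 2 * (S$h0$h * A$h$k) * z$k)"
    by (rule sum.swap)
  also have "\<dots> = (\<Sum>k\<in>UNIV. 2 * (\<Sum>h\<in>UNIV. S$h0$h * A$h$k) * z$k)"
    by (simp only: sum_distrib_right sum_distrib_left)
  also have "\<dots> = (\<Sum>k\<in>UNIV. 2 * (mat 1 :: complex^'n^'n)$h0$k * z$k)"
  proof -
    have "(\<Sum>h\<in>UNIV. S$h0$h * A$h$k) = (S ** A)$h0$k" for k by (simp add: matrix_matrix_mult_def)
    then show ?thesis using SA by simp
  qed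
  also have "\<dots> = 2 * z$h0"
    by (rule mat1_sum)
  finally show ?thesis .
qed

lemma comb_Lf2:
  fixes S A :: "complex^'n^'n"
  assumes AS: "A ** S = mat 1"
  shows "Lf A z (\<chi> j. S$j$k0) - \<i> * Lf A z (\<chi> j. \<i> * S$j$k0) = 2 * cnj (z$k0)"
proof -
  have t: "(cnj ((\<chi> j. S$j$k0)$h) * A$h$k * z$k + cnj (z$h) * A$h$k * (\<chi> j. S$j$k0)$k)
      + (- \<i>) * (cnj ((\<chi> j. \<i> * S$j$k0)$h) * A$h$k * z$k + cnj (z$h) * A$h$k * (\<chi> j. \<i> * S$j$k0)$k)
      = 2 * cnj (z$h) * (A$h$k * S$k$k0)" for h k
    by (simp add: algebra_simps)
  have "Lf A z (\<chi> j. S$j$k0) - \<i> * Lf A z (\<chi> j. \<i> * S$j$k0)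
      = Lf A z (\<chi> j. S$j$k0) + (- \<i>) * Lf A z (\<chi> j. \<i> * S$j$k0)" by simp
  also have "\<dots> = (\<Sum>h\<in>UNIV. \<Sum>k\<in>UNIV. 2 * cnj (z$h) * (A$h$k * S$k$k0))"
    unfolding Lf_lin t ..
  also have "\<dots> = (\<Sum>h\<in>UNIV. 2 * cnj (z$h) * (\<Sum>k\<in>UNIV. A$h$k * S$k$k0))"
    by (simp only: sum_distrib_left)
  also have "\<dots> = (\<Sum>h\<in>UNIV. 2 * cnj (z$h) * (mat 1 :: complex^'n^'n)$h$k0)"
  proof -
    have "(\<Sum>k\<in>UNIV. A$h$k * S$k$k0) = (A ** S)$h$k0" for h by (simp add: matrix_matrix_mult_def)
    then show ?thesis using AS by simp
  qed
  also have "\<dots> = 2 * cnj (z$k0)"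
    by (rule mat1_sum'[where f="\<lambda>h. cnj (z$h)"])
  finally show ?thesis .
qed




context
  fixes S :: "complex^'n^'n"
  assumes pd: "pos_def_mat S"
begin

definition "AA = matrix_inv S"
definition "II n m = integral\<^sup>L lborel (\<lambda>z. mnm n m z * exp (- herm_form AA z))"

lemma SA: "S ** AA = mat 1" and AS: "AA ** S = mat 1"
  using inv_mat[OF pd] by (auto simp: AA_def)

lemma lex: "\<exists>l>0. \<forall>z. Re (herm_form AA z) \<ge> l * (norm z)\<^sup>2"
  unfolding AA_def by (rule Q_lower[OF pd])

lemma rel1:
  assumes nh: "n h0 \<noteq> 0"
  shows "II n m = (\<Sum>j\<in>UNIV. of_nat (m j) * S$h0$j * II (n(h0 := n h0 - 1)) (m(j := m j - 1)))"
proof -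
  obtain l where l: "l > 0" and Ql: "\<And>z. Re (herm_form AA z) \<ge> l * (norm z)\<^sup>2" using lex by blast
  define n' where "n' = n(h0 := n h0 - 1)"
  define v1 where "v1 = (\<chi> j. cnj (S$h0$j))"
  define v2 where "v2 = (\<chi> j. \<i> * cnj (S$h0$j))"
  define E where "E = (\<lambda>z. exp (- herm_form AA z))"
  define G where "G = (\<lambda>v z. (dmono n' m z v - mnm n' m z * Lf AA z v) * E z)"
  define T where "T = (\<lambda>j z. mnm n' (m(j := m j - 1)) z * E z)"
  define T0 where "T0 = (\<lambda>z. mnm n m z * E z)"
  have Gi: "integrable lborel (G v)" for v
    unfolding G_def E_def by (rule ibp_dir(1)[OF l Ql])
  have G0: "integral\<^sup>L lborel (G v) = 0" for v
    unfolding G_def E_def by (rule ibp_dir(2)[OF l Ql])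
  have Ti: "integrable lborel (T j)" for j
    unfolding T_def E_def by (rule T_int[OF l Ql])
  have T0i: "integrable lborel T0"
    unfolding T0_def E_def by (rule T_int[OF l Ql])
  have pw: "G v1 z + \<i> * G v2 z = 2 * (\<Sum>j\<in>UNIV. of_nat (m j) * S$h0$j * T j z) - 2 * T0 z" for z
  proof -
    have "G v1 z + \<i> * G v2 z = ((dmono n' m z v1 + \<i> * dmono n' m z v2) - mnm n' m z * (Lf AA z v1 + \<i> * Lf AA z v2)) * E z"
      unfolding G_def by (simp add: algebra_simps)
    also have "\<dots> = (2 * (\<Sum>j\<in>UNIV. of_nat (m j) * S$h0$j * mnm n' (m(j := m j - 1)) z) - 2 * (mnm n' m z * z$h0)) * E z"
      unfolding v1_def v2_def comb_dmono1 comb_Lf1[OF SA] by (simp add: algebra_simps)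
    also have "mnm n' m z * z$h0 = mnm n m z"
      unfolding n'_def using mnm_succ_n[of n h0 m z] nh by simp
    finally have 1: "G v1 z + \<i> * G v2 z = (2 * (\<Sum>j\<in>UNIV. of_nat (m j) * S$h0$j * mnm n' (m(j := m j - 1)) z) - 2 * mnm n m z) * E z" .
    have 2: "(\<Sum>j\<in>UNIV. of_nat (m j) * S$h0$j * T j z) = (\<Sum>j\<in>UNIV. of_nat (m j) * S$h0$j * mnm n' (m(j := m j - 1)) z) * E z"
      unfolding T_def by (simp add: sum_distrib_right mult.assoc)
    show ?thesis unfolding 1 2 T0_def by (simp add: algebra_simps)
  qed
  have "0 = integral\<^sup>L lborel (G v1) + \<i> * integral\<^sup>L lborel (G v2)"
    by (simp add: G0)
  also have "\<dots> = integral\<^sup>L lborel (\<lambda>z. G v1 z + \<i> * G v2 z)"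
    using Gi by simp
  also have "\<dots> = integral\<^sup>L lborel (\<lambda>z. 2 * (\<Sum>j\<in>UNIV. of_nat (m j) * S$h0$j * T j z) - 2 * T0 z)"
    by (simp only: pw)
  also have "\<dots> = 2 * (\<Sum>j\<in>UNIV. of_nat (m j) * S$h0$j * integral\<^sup>L lborel (T j)) - 2 * integral\<^sup>L lborel T0"
    using Ti T0i by (simp add: integral_sum integrable_sum)
  finally have "integral\<^sup>L lborel T0 = (\<Sum>j\<in>UNIV. of_nat (m j) * S$h0$j * integral\<^sup>L lborel (T j))"
    by simp
  then show ?thesis
    unfolding II_def T0_def T_def E_def n'_def .
qed


lemma rel2:
  assumes mk: "m k0 \<noteq> 0"
  shows "II n m = (\<Sum>j\<in>UNIV. of_nat (n j) * S$j$k0 * II (n(j := n j - 1)) (m(k0 := m k0 - 1)))"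
proof -
  obtain l where l: "l > 0" and Ql: "\<And>z. Re (herm_form AA z) \<ge> l * (norm z)\<^sup>2" using lex by blast
  define m' where "m' = m(k0 := m k0 - 1)"
  define v1 where "v1 = (\<chi> j. S$j$k0)"
  define v2 where "v2 = (\<chi> j. \<i> * S$j$k0)"
  define E where "E = (\<lambda>z. exp (- herm_form AA z))"
  define G where "G = (\<lambda>v z. (dmono n m' z v - mnm n m' z * Lf AA z v) * E z)"
  define T where "T = (\<lambda>j z. mnm (n(j := n j - 1)) m' z * E z)"
  define T0 where "T0 = (\<lambda>z. mnm n m z * E z)"
  have Gi: "integrable lborel (G v)" for v
    unfolding G_def E_def by (rule ibp_dir(1)[OF l Ql])
  have G0: "integral\<^sup>L lborel (G v) = 0" for v
    unfolding G_def E_def by (rule ibp_dir(2)[OF l Ql])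
  have Ti: "integrable lborel (T j)" for j
    unfolding T_def E_def by (rule T_int[OF l Ql])
  have T0i: "integrable lborel T0"
    unfolding T0_def E_def by (rule T_int[OF l Ql])
  have pw: "G v1 z - \<i> * G v2 z = 2 * (\<Sum>j\<in>UNIV. of_nat (n j) * S$j$k0 * T j z) - 2 * T0 z" for z
  proof -
    have "G v1 z - \<i> * G v2 z = ((dmono n m' z v1 - \<i> * dmono n m' z v2) - mnm n m' z * (Lf AA z v1 - \<i> * Lf AA z v2)) * E z"
      unfolding G_def by (simp add: algebra_simps)
    also have "\<dots> = (2 * (\<Sum>j\<in>UNIV. of_nat (n j) * S$j$k0 * mnm (n(j := n j - 1)) m' z) - 2 * (mnm n m' z * cnj (z$k0))) * E z"
      unfolding v1_def v2_def comb_dmono2 comb_Lf2[OF AS] by (simp add: algebra_simps)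
    also have "mnm n m' z * cnj (z$k0) = mnm n m z"
      unfolding m'_def using mnm_succ_m[of m k0 n z] mk by simp
    finally have 1: "G v1 z - \<i> * G v2 z = (2 * (\<Sum>j\<in>UNIV. of_nat (n j) * S$j$k0 * mnm (n(j := n j - 1)) m' z) - 2 * mnm n m z) * E z" .
    have 2: "(\<Sum>j\<in>UNIV. of_nat (n j) * S$j$k0 * T j z) = (\<Sum>j\<in>UNIV. of_nat (n j) * S$j$k0 * mnm (n(j := n j - 1)) m' z) * E z"
      unfolding T_def by (simp add: sum_distrib_right mult.assoc)
    show ?thesis unfolding 1 2 T0_def by (simp add: algebra_simps)
  qed
  have "0 = integral\<^sup>L lborel (G v1) - \<i> * integral\<^sup>L lborel (G v2)"
    by (simp add: G0)
  also have "\<dots> = integral\<^sup>L lborel (\<lambda>z. G v1 z - \<i> * G v2 z)"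
    using Gi by simp
  also have "\<dots> = integral\<^sup>L lborel (\<lambda>z. 2 * (\<Sum>j\<in>UNIV. of_nat (n j) * S$j$k0 * T j z) - 2 * T0 z)"
    by (simp only: pw)
  also have "\<dots> = 2 * (\<Sum>j\<in>UNIV. of_nat (n j) * S$j$k0 * integral\<^sup>L lborel (T j)) - 2 * integral\<^sup>L lborel T0"
    using Ti T0i by (simp add: integral_sum integrable_sum)
  finally have "integral\<^sup>L lborel T0 = (\<Sum>j\<in>UNIV. of_nat (n j) * S$j$k0 * integral\<^sup>L lborel (T j))"
    by simp
  then show ?thesis
    unfolding II_def T0_def T_def E_def m'_def .
qed

lemma cn_eq: "cn_moment S n m = II n m / (of_real pi ^ CARD('n) * det S)"
proof -
  have "cn_moment S n m = integral\<^sup>L lborel (\<lambda>z. mnm n m z * exp (- herm_form AA z) / (of_real pi ^ CARD('n) * det S))"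
    unfolding cn_moment_def cn_density_def mnm_def AA_def by simp
  then show ?thesis unfolding II_def by simp
qed

lemma main:
  shows "(\<forall>h. n h \<noteq> 0 \<longrightarrow>
            cn_moment S n m = (\<Sum>k\<in>{k. m k \<noteq> 0}.
               of_nat (m k) * S$h$k * cn_moment S (n(h := n h - 1)) (m(k := m k - 1))))
       \<and> (\<forall>k. m k \<noteq> 0 \<longrightarrow>
            cn_moment S n m = (\<Sum>h\<in>{h. n h \<noteq> 0}.
               of_nat (n h) * S$h$k * cn_moment S (n(h := n h - 1)) (m(k := m k - 1))))"
proof (intro conjI allI impI)
  define K where "K = (of_real pi ^ CARD('n) * det S :: complex)"
  fix h assume nh: "n h \<noteq> 0"
  have "cn_moment S n m = (\<Sum>j\<in>UNIV. of_nat (m j) * S$h$j * II (n(h := n h - 1)) (m(j := m j - 1))) / K"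
    unfolding cn_eq K_def rel1[of n h m, OF nh] ..
  also have "\<dots> = (\<Sum>j\<in>UNIV. of_nat (m j) * S$h$j * cn_moment S (n(h := n h - 1)) (m(j := m j - 1)))"
    unfolding cn_eq K_def by (simp add: sum_divide_distrib)
  also have "\<dots> = (\<Sum>j\<in>{k. m k \<noteq> 0}. of_nat (m j) * S$h$j * cn_moment S (n(h := n h - 1)) (m(j := m j - 1)))"
    by (rule sum.mono_neutral_right) auto
  finally show "cn_moment S n m = (\<Sum>k\<in>{k. m k \<noteq> 0}.
               of_nat (m k) * S$h$k * cn_moment S (n(h := n h - 1)) (m(k := m k - 1)))" .
next
  define K where "K = (of_real pi ^ CARD('n) * det S :: complex)"
  fix k assume mk: "m k \<noteq> 0"
  have "cn_moment S n m = (\<Sum>j\<in>UNIV. of_nat (n j) * S$j$k * II (n(j := n j - 1)) (m(k := m k - 1))) / K"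
    unfolding cn_eq K_def rel2[of m k n, OF mk] ..
  also have "\<dots> = (\<Sum>j\<in>UNIV. of_nat (n j) * S$j$k * cn_moment S (n(j := n j - 1)) (m(k := m k - 1)))"
    unfolding cn_eq K_def by (simp add: sum_divide_distrib)
  also have "\<dots> = (\<Sum>j\<in>{h. n h \<noteq> 0}. of_nat (n j) * S$j$k * cn_moment S (n(j := n j - 1)) (m(k := m k - 1)))"
    by (rule sum.mono_neutral_right) auto
  finally show "cn_moment S n m = (\<Sum>h\<in>{h. n h \<noteq> 0}.
               of_nat (n h) * S$h$k * cn_moment S (n(h := n h - 1)) (m(k := m k - 1)))" .
qed

end


theorem proposition3p3:
  fixes S :: "complex^'n^'n" and n m :: "'n \<Rightarrow> nat"
  assumes "hermitian_mat S" and "pos_def_mat S"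
  shows "(\<forall>h. n h \<noteq> 0 \<longrightarrow>
            cn_moment S n m = (\<Sum>k\<in>{k. m k \<noteq> 0}.
               of_nat (m k) * S$h$k * cn_moment S (n(h := n h - 1)) (m(k := m k - 1))))
       \<and> (\<forall>k. m k \<noteq> 0 \<longrightarrow>
            cn_moment S n m = (\<Sum>h\<in>{h. n h \<noteq> 0}.
               of_nat (n h) * S$h$k * cn_moment S (n(h := n h - 1)) (m(k := m k - 1))))"
  by (rule main[OF assms(2)])

end
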